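(* Let $N\geq 4$, $K\geq 2$, $1\leq l\leq K-1$, $K+1\leq r\leq N-1$ be integers, and for $1\leq k\leq N$ let $G_k:\mathbb{R}\to\mathbb{R}$ with $G_k\in L^1(\mathbb{R})$. (a) If $a_k>0$, $b_k\in\mathbb{R}$, $b_k\neq 0$ for $1\leq k\leq l$, then $N_{a,b,k}<\infty$. (b) If $a_k=0$, $b_k\in\mathbb{R}$, $b_k\neq0$ for $l+1\leq k\leq K$, and additionally $xG_k(x)\in L^1(\mathbb{R})$, then $N_{0,b,k}<\infty$ if and only if $\int_{\mathbb{R}}G_k(x)\,dx=0$. (c) If $a_k>0$ and $xG_k(x)\in L^1(\mathbb{R})$ for $K+1\leq k\leq r$, then $M_{a,k}<\infty$ if and only if $\int_{\mathbb{R}}G_k(x)e^{\mp i\sqrt{a_k}x}\,dx=0$ (for both signs). (d) If $a_k=0$ and $x^2G_k(x)\in L^1(\mathbb{R})$ for $r+1\leq k\leq N$, then $M_{0,k}<\infty$ if and only if $\int_{\mathbb{R}}G_k(x)\,dx=0$ and $\int_{\mathbb{R}}xG_k(x)\,dx=0$.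
   Context: Fourier transform: $\widehat{G_k}(p)=\frac{1}{\sqrt{2\pi}}\int_{\mathbb{R}}G_k(x)e^{-ipx}dx$. For constants $a_k\geq0$ and $b_k\in\mathbb{R}$, define $N_{a,b,k}=\max\Big\{\Big\|\frac{\widehat{G_k}(p)}{p^2-a_k-ib_kp}\Big\|_{L^\infty(\mathbb{R})},\Big\|\frac{p^2\widehat{G_k}(p)}{p^2-a_k-ib_kp}\Big\|_{L^\infty(\mathbb{R})}\Big\}$ and $M_{a,k}=\max\Big\{\Big\|\frac{\widehat{G_k}(p)}{p^2-a_k}\Big\|_{L^\infty(\mathbb{R})},\Big\|\frac{p^2\widehat{G_k}(p)}{p^2-a_k}\Big\|_{L^\infty(\mathbb{R})}\Big\}$; $N_{0,b,k}$ and $M_{0,k}$ denote these quantities when $a_k=0$. *)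

theory Defs
  imports "HOL-Analysis.Analysis"
begin

definition fourier :: "(real \<Rightarrow> real) \<Rightarrow> real \<Rightarrow> complex" where
  "fourier G p = complex_of_real (1 / sqrt (2 * pi)) *
     (LINT x|lborel. complex_of_real (G x) * exp (- (\<i> * complex_of_real (p * x))))"

definition Linf_finite :: "(real \<Rightarrow> complex) \<Rightarrow> bool" where
  "Linf_finite f \<longleftrightarrow> (\<exists>C. AE p in lborel. cmod (f p) \<le> C)"

definition N_finite :: "(real \<Rightarrow> real) \<Rightarrow> real \<Rightarrow> real \<Rightarrow> bool" where
  "N_finite G a b \<longleftrightarrow>
     Linf_finite (\<lambda>p. fourier G p / (complex_of_real (p\<^sup>2 - a) - \<i> * complex_of_real (b * p))) \<and>
     Linf_finite (\<lambda>p. complex_of_real (p\<^sup>2) * fourier G p /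
                     (complex_of_real (p\<^sup>2 - a) - \<i> * complex_of_real (b * p)))"

definition M_finite :: "(real \<Rightarrow> real) \<Rightarrow> real \<Rightarrow> bool" where
  "M_finite G a \<longleftrightarrow>
     Linf_finite (\<lambda>p. fourier G p / complex_of_real (p\<^sup>2 - a)) \<and>
     Linf_finite (\<lambda>p. complex_of_real (p\<^sup>2) * fourier G p / complex_of_real (p\<^sup>2 - a))"

end

theory Submission
  imports Defs "HOL-Probability.Characteristic_Functions"
begin

lemma iexp1: "cmod (exp (\<i> * complex_of_real t) - 1) \<le> \<bar>t\<bar>"
  using iexp_approx1[of t 0] by simp

lemma iexp2: "cmod (exp (\<i> * complex_of_real t) - 1 - \<i> * complex_of_real t) \<le> t\<^sup>2 / 2"
  using iexp_approx1[of t 1] by (simp add: power2_eq_square diff_diff_eq)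

lemma kern_diff: "cmod (exp (- (\<i> * complex_of_real (p * x))) - exp (- (\<i> * complex_of_real (q * x)))) \<le> \<bar>p - q\<bar> * \<bar>x\<bar>"
proof -
  have "exp (- (\<i> * complex_of_real (p * x))) - exp (- (\<i> * complex_of_real (q * x)))
     = exp (- (\<i> * complex_of_real (q * x))) * (exp (\<i> * complex_of_real ((q - p) * x)) - 1)"
    by (simp add: algebra_simps flip: exp_add)
  also have "cmod \<dots> = cmod (exp (\<i> * complex_of_real ((q - p) * x)) - 1)"
    by (simp add: norm_mult)
  also have "\<dots> \<le> \<bar>(q - p) * x\<bar>" by (rule iexp1)
  finally show ?thesis by (simp add: abs_mult abs_minus_commute)
qed

lemma kern2: "cmod (exp (- (\<i> * complex_of_real (p * x))) - 1 + \<i> * complex_of_real (p * x)) \<le> (p * x)\<^sup>2 / 2"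
  using iexp2[of "- (p * x)"] by simp

lemma integrable_kern:
  assumes "integrable lborel (G :: real \<Rightarrow> real)"
  shows "integrable lborel (\<lambda>x. complex_of_real (G x) * exp (- (\<i> * complex_of_real (p * x))))"
proof (rule Bochner_Integration.integrable_bound[of _ "\<lambda>x. complex_of_real (G x)"])
  show "integrable lborel (\<lambda>x. complex_of_real (G x))" using assms by simp
  have "G \<in> borel_measurable lborel" using assms by auto
  then show "(\<lambda>x. complex_of_real (G x) * exp (- (\<i> * complex_of_real (p * x)))) \<in> borel_measurable lborel"
    by measurable
  show "AE x in lborel. norm (complex_of_real (G x) * exp (- (\<i> * complex_of_real (p * x)))) \<le> norm (complex_of_real (G x))"
    by (simp add: norm_mult)
qed

definition "c0 = 1 / sqrt (2 * pi)"

lemma c0_pos: "c0 > 0" by (simp add: c0_def)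

lemma fourier_c0: "fourier G p = complex_of_real c0 *
     (LINT x|lborel. complex_of_real (G x) * exp (- (\<i> * complex_of_real (p * x))))"
  by (simp add: fourier_def c0_def)

lemma fourier_bound:
  assumes "integrable lborel (G :: real \<Rightarrow> real)"
  shows "cmod (fourier G p) \<le> c0 * (LINT x|lborel. \<bar>G x\<bar>)"
proof -
  have "cmod (LINT x|lborel. complex_of_real (G x) * exp (- (\<i> * complex_of_real (p * x))))
      \<le> (LINT x|lborel. \<bar>G x\<bar>)"
    by (rule Bochner_Integration.integral_norm_bound_integral) (use assms integrable_kern in \<open>auto simp: norm_mult\<close>)
  then show ?thesis unfolding fourier_c0 norm_mult using c0_pos
    by (simp add: mult_left_mono)
qed

lemma fourier_lip:
  assumes "integrable lborel (G :: real \<Rightarrow> real)" "integrable lborel (\<lambda>x. x * G x)"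
  shows "cmod (fourier G p - fourier G q) \<le> c0 * (LINT x|lborel. \<bar>x * G x\<bar>) * \<bar>p - q\<bar>"
proof -
  let ?k = "\<lambda>p x. complex_of_real (G x) * exp (- (\<i> * complex_of_real (p * x)))"
  have "fourier G p - fourier G q = complex_of_real c0 * (LINT x|lborel. ?k p x - ?k q x)"
    unfolding fourier_c0
    using Bochner_Integration.integral_diff[OF integrable_kern[OF assms(1), of p] integrable_kern[OF assms(1), of q]]
    by (simp add: right_diff_distrib)
  moreover have "cmod (LINT x|lborel. ?k p x - ?k q x) \<le> (LINT x|lborel. \<bar>p - q\<bar> * \<bar>x * G x\<bar>)"
  proof (rule Bochner_Integration.integral_norm_bound_integral)
    show "integrable lborel (\<lambda>x. ?k p x - ?k q x)" using assms integrable_kern by auto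
    show "integrable lborel (\<lambda>x. \<bar>p - q\<bar> * \<bar>x * G x\<bar>)" using assms by auto
    fix x
    have "cmod (?k p x - ?k q x) = \<bar>G x\<bar> * cmod (exp (- (\<i> * complex_of_real (p * x))) - exp (- (\<i> * complex_of_real (q * x))))"
      by (simp add: norm_mult flip: right_diff_distrib)
    also have "\<dots> \<le> \<bar>G x\<bar> * (\<bar>p - q\<bar> * \<bar>x\<bar>)" by (rule mult_left_mono[OF kern_diff]) auto
    finally show "cmod (?k p x - ?k q x) \<le> \<bar>p - q\<bar> * \<bar>x * G x\<bar>" by (simp add: abs_mult algebra_simps)
  qed
  ultimately show ?thesis using c0_pos by (simp add: norm_mult mult_left_mono mult_ac)
qed

lemma fourier_taylor:
  assumes "integrable lborel (G :: real \<Rightarrow> real)" "integrable lborel (\<lambda>x. x * G x)"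
    "integrable lborel (\<lambda>x. x\<^sup>2 * G x)"
  shows "cmod (fourier G p - complex_of_real (c0 * (LINT x|lborel. G x))
     + \<i> * complex_of_real (p * c0 * (LINT x|lborel. x * G x)))
     \<le> c0 * (LINT x|lborel. \<bar>x\<^sup>2 * G x\<bar>) / 2 * p\<^sup>2"
proof -
  let ?k = "\<lambda>x. complex_of_real (G x) * exp (- (\<i> * complex_of_real (p * x)))"
  let ?h = "\<lambda>x. ?k x - complex_of_real (G x) + \<i> * complex_of_real p * complex_of_real (x * G x)"
  have i1: "(LINT x|lborel. complex_of_real (G x)) = complex_of_real (LINT x|lborel. G x)" by simp
  have i2: "(LINT x|lborel. \<i> * complex_of_real p * complex_of_real (x * G x))
     = \<i> * complex_of_real p * complex_of_real (LINT x|lborel. x * G x)"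
    by (simp del: of_real_mult)
  have int1: "integrable lborel (\<lambda>x. ?k x - complex_of_real (G x))"
    using assms integrable_kern[OF assms(1)] by (intro Bochner_Integration.integrable_diff) auto
  have int2: "integrable lborel (\<lambda>x. \<i> * complex_of_real p * complex_of_real (x * G x))"
    using assms(2) by (intro integrable_mult_right integrable_of_real)
  have "(LINT x|lborel. ?h x) = (LINT x|lborel. ?k x - complex_of_real (G x))
      + (LINT x|lborel. \<i> * complex_of_real p * complex_of_real (x * G x))"
    by (rule Bochner_Integration.integral_add[OF int1 int2])
  also have "(LINT x|lborel. ?k x - complex_of_real (G x)) = (LINT x|lborel. ?k x) - (LINT x|lborel. complex_of_real (G x))"
    using assms integrable_kern[OF assms(1)] by (intro Bochner_Integration.integral_diff) auto
  finally have hint: "(LINT x|lborel. ?h x) = (LINT x|lborel. ?k x) - complex_of_real (LINT x|lborel. G x)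
      + \<i> * complex_of_real p * complex_of_real (LINT x|lborel. x * G x)"
    unfolding i1 i2 .
  then have eq: "fourier G p - complex_of_real (c0 * (LINT x|lborel. G x))
     + \<i> * complex_of_real (p * c0 * (LINT x|lborel. x * G x)) = complex_of_real c0 * (LINT x|lborel. ?h x)"
    unfolding fourier_c0 hint by (simp add: algebra_simps)
  have "cmod (LINT x|lborel. ?h x) \<le> (LINT x|lborel. p\<^sup>2 / 2 * \<bar>x\<^sup>2 * G x\<bar>)"
  proof (rule Bochner_Integration.integral_norm_bound_integral)
    show "integrable lborel ?h" using int1 int2 by (rule Bochner_Integration.integrable_add)
    show "integrable lborel (\<lambda>x. p\<^sup>2 / 2 * \<bar>x\<^sup>2 * G x\<bar>)" using assms by auto
    fix x
    have "?h x = complex_of_real (G x) * (exp (- (\<i> * complex_of_real (p * x))) - 1 + \<i> * complex_of_real (p * x))"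
      by (simp add: algebra_simps)
    then have "cmod (?h x) = \<bar>G x\<bar> * cmod (exp (- (\<i> * complex_of_real (p * x))) - 1 + \<i> * complex_of_real (p * x))"
      by (simp add: norm_mult)
    also have "\<dots> \<le> \<bar>G x\<bar> * ((p * x)\<^sup>2 / 2)" by (rule mult_left_mono[OF kern2]) auto
    finally show "cmod (?h x) \<le> p\<^sup>2 / 2 * \<bar>x\<^sup>2 * G x\<bar>" by (simp add: abs_mult power_mult_distrib algebra_simps)
  qed
  then show ?thesis unfolding eq using c0_pos by (simp add: norm_mult mult_left_mono mult_ac)
qed

lemma AE_zero:
  fixes h :: "real \<Rightarrow> real"
  assumes ae: "AE p in lborel. c \<le> h p" and lim: "(h \<longlongrightarrow> 0) (at p0)" and c: "c \<ge> 0"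
  shows "c = 0"
proof (rule ccontr)
  assume "c \<noteq> 0"
  with c have cpos: "c > 0" by simp
  have "(h \<longlongrightarrow> 0) (at_right p0)" using lim by (rule tendsto_mono[OF at_within_le_at])
  then have "eventually (\<lambda>p. h p < c) (at_right p0)" using cpos by (rule order_tendstoD(2))
  then obtain b where b: "b > p0" "\<And>y. y > p0 \<Longrightarrow> y < b \<Longrightarrow> h y < c"
    using eventually_at_right[of p0 "p0 + 1"] by auto
  from ae obtain N where N: "{x \<in> space lborel. \<not> c \<le> h x} \<subseteq> N" "emeasure lborel N = 0" "N \<in> sets lborel"
    by (rule AE_E)
  have "{p0<..<b} \<subseteq> N" using N(1) b(2) by force
  then have "emeasure lborel {p0<..<b} \<le> emeasure lborel N" by (rule emeasure_mono) (use N in auto)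
  then show False using N(2) b(1) by simp
qed

lemma Linf_bound: "(\<And>p. cmod (f p) \<le> C) \<Longrightarrow> Linf_finite f"
  unfolding Linf_finite_def by (intro exI[of _ C] AE_I2) auto

lemma fourier_zero: "fourier G 0 = complex_of_real (c0 * (LINT x|lborel. G x))"
  by (simp add: fourier_c0)

lemma fourier_zero_iff: "fourier G 0 = 0 \<longleftrightarrow> (LINT x|lborel. G x) = 0"
  using c0_pos by (simp add: fourier_zero)

lemma integrable_xG:
  assumes "integrable lborel (G :: real \<Rightarrow> real)" "integrable lborel (\<lambda>x. x\<^sup>2 * G x)"
  shows "integrable lborel (\<lambda>x. x * G x)"
proof (rule Bochner_Integration.integrable_bound[of _ "\<lambda>x. \<bar>G x\<bar> + \<bar>x\<^sup>2 * G x\<bar>"])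
  show "integrable lborel (\<lambda>x. \<bar>G x\<bar> + \<bar>x\<^sup>2 * G x\<bar>)" using assms by auto
  have "G \<in> borel_measurable lborel" using assms by auto
  then show "(\<lambda>x. x * G x) \<in> borel_measurable lborel" by measurable
  show "AE x in lborel. norm (x * G x) \<le> norm (\<bar>G x\<bar> + \<bar>x\<^sup>2 * G x\<bar>)"
  proof (rule AE_I2)
    fix x :: real
    have "\<bar>x\<bar> \<le> 1 + x\<^sup>2"
    proof -
      have "0 \<le> (\<bar>x\<bar> - 1)\<^sup>2" by simp
      then have "0 \<le> x\<^sup>2 - 2 * \<bar>x\<bar> + 1" by (simp add: power2_diff)
      then show ?thesis using zero_le_power2[of x] by linarith
    qed
    then have "\<bar>x\<bar> * \<bar>G x\<bar> \<le> (1 + x\<^sup>2) * \<bar>G x\<bar>" by (rule mult_right_mono) auto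
    then show "norm (x * G x) \<le> norm (\<bar>G x\<bar> + \<bar>x\<^sup>2 * G x\<bar>)"
      by (simp add: abs_mult algebra_simps)
  qed
qed

lemma part_a:
  assumes G: "integrable lborel (G :: real \<Rightarrow> real)" and a: "a > 0" and b: "b \<noteq> 0"
  shows "N_finite G a b"
proof -
  define d where "d p = complex_of_real (p\<^sup>2 - a) - \<i> * complex_of_real (b * p)" for p
  define m where "m = min (3 * a / 4) (\<bar>b\<bar> * sqrt a / 2)"
  define B where "B = c0 * (LINT x|lborel. \<bar>G x\<bar>)"
  have mpos: "m > 0" using a b by (simp add: m_def)
  have B0: "B \<ge> 0" unfolding B_def using c0_pos by (simp add: integral_nonneg_AE)
  have FB: "cmod (fourier G p) \<le> B" for p using fourier_bound[OF G] by (simp add: B_def)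
  have dm: "cmod (d p) \<ge> m" for p
  proof (cases "\<bar>p\<bar> \<le> sqrt a / 2")
    case True
    then have "p\<^sup>2 \<le> (sqrt a / 2)\<^sup>2" by (metis abs_ge_zero power2_abs power_mono)
    then have "p\<^sup>2 \<le> a / 4" using a by (simp add: power_divide)
    then have "\<bar>Re (d p)\<bar> \<ge> 3 * a / 4" using a by (simp add: d_def abs_if)
    then show ?thesis using abs_Re_le_cmod[of "d p"] by (simp add: m_def)
  next
    case False
    then have "\<bar>b\<bar> * \<bar>p\<bar> \<ge> \<bar>b\<bar> * (sqrt a / 2)" using b by (intro mult_left_mono) auto
    then have "\<bar>Im (d p)\<bar> \<ge> \<bar>b\<bar> * sqrt a / 2" by (simp add: d_def abs_mult)
    then show ?thesis using abs_Im_le_cmod[of "d p"] by (simp add: m_def)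
  qed
  have dpos: "cmod (d p) > 0" for p using dm[of p] mpos by linarith
  have p2: "p\<^sup>2 \<le> cmod (d p) + a" for p
    using abs_Re_le_cmod[of "d p"] by (simp add: d_def)
  have b1: "cmod (fourier G p / d p) \<le> B / m" for p
  proof -
    have "cmod (fourier G p / d p) = cmod (fourier G p) / cmod (d p)" by (simp add: norm_divide)
    also have "\<dots> \<le> B / cmod (d p)" using FB dpos by (simp add: divide_right_mono)
    also have "\<dots> \<le> B / m" using divide_left_mono[OF dm[of p] B0] mpos dpos[of p] by simp
    finally show ?thesis .
  qed
  have b2: "cmod (complex_of_real (p\<^sup>2) * fourier G p / d p) \<le> B * (1 + a / m)" for p
  proof -
    have "cmod (complex_of_real (p\<^sup>2) * fourier G p / d p) = p\<^sup>2 / cmod (d p) * cmod (fourier G p)"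
      by (simp add: norm_divide norm_mult del: of_real_power)
    also have "\<dots> \<le> (1 + a / m) * B"
    proof (rule mult_mono)
      have "p\<^sup>2 / cmod (d p) \<le> (cmod (d p) + a) / cmod (d p)" using p2 dpos by (simp add: divide_right_mono)
      also have "\<dots> = 1 + a / cmod (d p)" using dpos by (simp add: field_simps)
      also have "\<dots> \<le> 1 + a / m" using divide_left_mono[OF dm[of p], of a] a mpos dpos[of p] by simp
      finally show "p\<^sup>2 / cmod (d p) \<le> 1 + a / m" .
    qed (use FB dpos a mpos in auto)
    finally show ?thesis by (simp add: mult_ac)
  qed
  show ?thesis unfolding N_finite_def
    using Linf_bound[of "\<lambda>p. fourier G p / d p", OF b1]
      Linf_bound[of "\<lambda>p. complex_of_real (p\<^sup>2) * fourier G p / d p", OF b2]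
    by (simp add: d_def)
qed

lemma part_b:
  assumes G: "integrable lborel (G :: real \<Rightarrow> real)" and xG: "integrable lborel (\<lambda>x. x * G x)"
    and b: "b \<noteq> 0"
  shows "N_finite G 0 b \<longleftrightarrow> (LINT x|lborel. G x) = 0"
proof -
  define d where "d p = complex_of_real (p\<^sup>2) - \<i> * complex_of_real (b * p)" for p
  define B where "B = c0 * (LINT x|lborel. \<bar>G x\<bar>)"
  define L where "L = c0 * (LINT x|lborel. \<bar>x * G x\<bar>)"
  have B0: "B \<ge> 0" unfolding B_def using c0_pos by (simp add: integral_nonneg_AE)
  have L0: "L \<ge> 0" unfolding L_def using c0_pos by (simp add: integral_nonneg_AE)
  have FB: "cmod (fourier G p) \<le> B" for p using fourier_bound[OF G] by (simp add: B_def)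
  have FL: "cmod (fourier G p - fourier G q) \<le> L * \<bar>p - q\<bar>" for p q
    using fourier_lip[OF G xG] by (simp add: L_def)
  have dfac: "d p = complex_of_real p * (complex_of_real p - \<i> * complex_of_real b)" for p
    by (simp add: d_def power2_eq_square algebra_simps)
  have e1: "cmod (complex_of_real p - \<i> * complex_of_real b) \<ge> \<bar>p\<bar>" for p
    using abs_Re_le_cmod[of "complex_of_real p - \<i> * complex_of_real b"] by simp
  have e2: "cmod (complex_of_real p - \<i> * complex_of_real b) \<ge> \<bar>b\<bar>" for p
    using abs_Im_le_cmod[of "complex_of_real p - \<i> * complex_of_real b"] by simp
  have nd: "cmod (d p) = \<bar>p\<bar> * cmod (complex_of_real p - \<i> * complex_of_real b)" for p
    by (simp add: dfac norm_mult)
  have eq: "N_finite G 0 b \<longleftrightarrow> Linf_finite (\<lambda>p. fourier G p / d p) \<and>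
      Linf_finite (\<lambda>p. complex_of_real (p\<^sup>2) * fourier G p / d p)"
    unfolding N_finite_def d_def by simp
  show ?thesis
  proof
    assume "N_finite G 0 b"
    then obtain C where C: "AE p in lborel. cmod (fourier G p / d p) \<le> C"
      unfolding eq Linf_finite_def by blast
    have "AE p in lborel. cmod (fourier G 0) \<le> C * cmod (d p) + L * \<bar>p\<bar>"
      using C AE_lborel_singleton[of 0]
    proof eventually_elim
      case (elim p)
      have "\<bar>b\<bar> > 0" using b by simp
      then have "cmod (complex_of_real p - \<i> * complex_of_real b) > 0" using e2[of p] by linarith
      then have dnz: "cmod (d p) > 0" using elim(2) nd[of p] by simp
      have "cmod (fourier G p) = cmod (fourier G p / d p) * cmod (d p)"
        using dnz by (simp add: norm_divide)
      also have "\<dots> \<le> C * cmod (d p)" using elim(1) dnz by (simp add: mult_right_mono)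
      finally have 1: "cmod (fourier G p) \<le> C * cmod (d p)" .
      have "cmod (fourier G 0) \<le> cmod (fourier G p) + cmod (fourier G p - fourier G 0)"
        by (metis norm_triangle_sub add.commute norm_minus_commute)
      then show ?case using 1 FL[of p 0] by simp
    qed
    moreover have "((\<lambda>p. C * cmod (d p) + L * \<bar>p\<bar>) \<longlongrightarrow> 0) (at 0)"
    proof -
      have "((\<lambda>p. C * cmod (d p) + L * \<bar>p\<bar>) \<longlongrightarrow> C * cmod (d 0) + L * \<bar>0\<bar>) (at 0)"
        unfolding d_def by (intro tendsto_intros)
      then show ?thesis by (simp add: d_def)
    qed
    ultimately have "cmod (fourier G 0) = 0" by (rule AE_zero) simp
    then show "(LINT x|lborel. G x) = 0" using fourier_zero_iff by simp
  next
    assume "(LINT x|lborel. G x) = 0"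
    then have F0: "fourier G 0 = 0" using fourier_zero_iff by simp
    have FLp: "cmod (fourier G p) \<le> L * \<bar>p\<bar>" for p using FL[of p 0] F0 by simp
    have b1: "cmod (fourier G p / d p) \<le> L / \<bar>b\<bar>" for p
    proof (cases "p = 0")
      case True then show ?thesis using L0 by (simp add: d_def)
    next
      case False
      have "cmod (fourier G p / d p) = cmod (fourier G p) / (\<bar>p\<bar> * cmod (complex_of_real p - \<i> * complex_of_real b))"
        by (simp add: norm_divide nd)
      also have "\<dots> \<le> (L * \<bar>p\<bar>) / (\<bar>p\<bar> * \<bar>b\<bar>)"
        using FLp[of p] e2[of p] False b L0
        by (intro frac_le mult_left_mono) auto
      also have "\<dots> = L / \<bar>b\<bar>" using False by simp
      finally show ?thesis .
    qed
    have b2: "cmod (complex_of_real (p\<^sup>2) * fourier G p / d p) \<le> B" for p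
    proof (cases "p = 0")
      case True then show ?thesis using B0 by (simp add: d_def)
    next
      case False
      have "cmod (complex_of_real (p\<^sup>2) * fourier G p / d p) = p\<^sup>2 * cmod (fourier G p) / (\<bar>p\<bar> * cmod (complex_of_real p - \<i> * complex_of_real b))"
        by (simp add: norm_divide norm_mult nd del: of_real_power)
      also have "\<dots> \<le> p\<^sup>2 * B / (\<bar>p\<bar> * \<bar>p\<bar>)"
        using FB[of p] e1[of p] False B0
        by (intro frac_le mult_left_mono) (auto simp: zero_less_mult_iff)
      also have "\<dots> = B" using False by (simp add: power2_eq_square abs_mult[symmetric])
      finally show ?thesis .
    qed
    show "N_finite G 0 b" unfolding eq
      using Linf_bound[of "\<lambda>p. fourier G p / d p", OF b1]
        Linf_bound[of "\<lambda>p. complex_of_real (p\<^sup>2) * fourier G p / d p", OF b2] by simp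
  qed
qed

lemma fourier_at_zero_iff:
  "fourier G p = 0 \<longleftrightarrow> (LINT x|lborel. complex_of_real (G x) * exp (- (\<i> * complex_of_real (p * x)))) = 0"
  using c0_pos by (simp add: fourier_c0)

lemma part_c:
  assumes G: "integrable lborel (G :: real \<Rightarrow> real)" and xG: "integrable lborel (\<lambda>x. x * G x)"
    and a: "a > 0"
  shows "M_finite G a \<longleftrightarrow>
     (LINT x|lborel. complex_of_real (G x) * exp (- (\<i> * complex_of_real (sqrt a * x)))) = 0 \<and>
     (LINT x|lborel. complex_of_real (G x) * exp (\<i> * complex_of_real (sqrt a * x))) = 0"
proof -
  define s where "s = sqrt a"
  have s0: "s > 0" using a by (simp add: s_def)
  have ss: "a = s\<^sup>2" using a by (simp add: s_def)
  define B where "B = c0 * (LINT x|lborel. \<bar>G x\<bar>)"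
  define L where "L = c0 * (LINT x|lborel. \<bar>x * G x\<bar>)"
  have B0: "B \<ge> 0" unfolding B_def using c0_pos by (simp add: integral_nonneg_AE)
  have L0: "L \<ge> 0" unfolding L_def using c0_pos by (simp add: integral_nonneg_AE)
  have FB: "cmod (fourier G p) \<le> B" for p using fourier_bound[OF G] by (simp add: B_def)
  have FL: "cmod (fourier G p - fourier G q) \<le> L * \<bar>p - q\<bar>" for p q
    using fourier_lip[OF G xG] by (simp add: L_def)
  have fac: "p\<^sup>2 - a = (p - s) * (p + s)" for p by (simp add: ss power2_eq_square algebra_simps)
  have rhs: "((LINT x|lborel. complex_of_real (G x) * exp (- (\<i> * complex_of_real (sqrt a * x)))) = 0 \<and>
     (LINT x|lborel. complex_of_real (G x) * exp (\<i> * complex_of_real (sqrt a * x))) = 0)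
     \<longleftrightarrow> fourier G s = 0 \<and> fourier G (- s) = 0"
    unfolding fourier_at_zero_iff s_def by simp
  have nec: "fourier G q = 0" if q: "q = s \<or> q = - s" and C: "AE p in lborel. cmod (fourier G p / complex_of_real (p\<^sup>2 - a)) \<le> C" for q C
  proof -
    have "AE p in lborel. cmod (fourier G q) \<le> C * \<bar>p\<^sup>2 - a\<bar> + L * \<bar>p - q\<bar>"
      using C AE_lborel_singleton[of s] AE_lborel_singleton[of "-s"]
    proof eventually_elim
      case (elim p)
      have dnz: "\<bar>p\<^sup>2 - a\<bar> > 0" using elim(2,3) unfolding fac by auto
      have "cmod (fourier G p) = cmod (fourier G p / complex_of_real (p\<^sup>2 - a)) * \<bar>p\<^sup>2 - a\<bar>"
        using dnz by (simp add: norm_divide del: of_real_diff of_real_power)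
      also have "\<dots> \<le> C * \<bar>p\<^sup>2 - a\<bar>" using elim(1) dnz by (simp add: mult_right_mono)
      finally have 1: "cmod (fourier G p) \<le> C * \<bar>p\<^sup>2 - a\<bar>" .
      have "cmod (fourier G q) \<le> cmod (fourier G p) + cmod (fourier G p - fourier G q)"
        by (metis norm_triangle_sub add.commute norm_minus_commute)
      then show ?case using 1 FL[of p q] by simp
    qed
    moreover have "((\<lambda>p. C * \<bar>p\<^sup>2 - a\<bar> + L * \<bar>p - q\<bar>) \<longlongrightarrow> 0) (at q)"
    proof -
      have "((\<lambda>p. C * \<bar>p\<^sup>2 - a\<bar> + L * \<bar>p - q\<bar>) \<longlongrightarrow> C * \<bar>q\<^sup>2 - a\<bar> + L * \<bar>q - q\<bar>) (at q)"
        by (intro tendsto_intros)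
      moreover have "q\<^sup>2 = a" using q ss by auto
      ultimately show ?thesis by simp
    qed
    ultimately have "cmod (fourier G q) = 0" by (rule AE_zero) simp
    then show ?thesis by simp
  qed
  show ?thesis unfolding rhs M_finite_def
  proof
    assume "Linf_finite (\<lambda>p. fourier G p / complex_of_real (p\<^sup>2 - a)) \<and>
      Linf_finite (\<lambda>p. complex_of_real (p\<^sup>2) * fourier G p / complex_of_real (p\<^sup>2 - a))"
    then obtain C where C: "AE p in lborel. cmod (fourier G p / complex_of_real (p\<^sup>2 - a)) \<le> C"
      unfolding Linf_finite_def by blast
    show "fourier G s = 0 \<and> fourier G (- s) = 0" using nec[OF _ C] by auto
  next
    assume Z: "fourier G s = 0 \<and> fourier G (- s) = 0"
    have b1: "cmod (fourier G p / complex_of_real (p\<^sup>2 - a)) \<le> L / s" for p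
    proof (cases "p\<^sup>2 = a")
      case True then show ?thesis using L0 s0 by simp
    next
      case False
      then have pn: "p \<noteq> s" "p \<noteq> -s" using ss by auto
      show ?thesis
      proof (cases "p \<ge> 0")
        case True
        have "cmod (fourier G p) \<le> L * \<bar>p - s\<bar>" using FL[of p s] Z by simp
        moreover have "\<bar>p\<^sup>2 - a\<bar> = \<bar>p - s\<bar> * (p + s)" using True s0 unfolding fac by (simp add: abs_mult)
        moreover have "\<bar>p - s\<bar> * s \<le> \<bar>p - s\<bar> * (p + s)" using True by (intro mult_left_mono) auto
        ultimately have "cmod (fourier G p) / \<bar>p\<^sup>2 - a\<bar> \<le> (L * \<bar>p - s\<bar>) / (\<bar>p - s\<bar> * s)"
          using pn s0 L0 by (intro frac_le) auto
        also have "\<dots> = L / s" using pn by simp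
        finally show ?thesis by (simp add: norm_divide del: of_real_diff of_real_power)
      next
        case False
        have "cmod (fourier G p) \<le> L * \<bar>p + s\<bar>" using FL[of p "-s"] Z by simp
        moreover have "\<bar>p\<^sup>2 - a\<bar> = \<bar>p + s\<bar> * (s - p)" using False s0 unfolding fac by (simp add: abs_mult)
        moreover have "\<bar>p + s\<bar> * s \<le> \<bar>p + s\<bar> * (s - p)" using False by (intro mult_left_mono) auto
        ultimately have "cmod (fourier G p) / \<bar>p\<^sup>2 - a\<bar> \<le> (L * \<bar>p + s\<bar>) / (\<bar>p + s\<bar> * s)"
          using pn s0 L0 by (intro frac_le) auto
        also have "\<dots> = L / s" using pn by (simp add: add_eq_0_iff)
        finally show ?thesis by (simp add: norm_divide del: of_real_diff of_real_power)
      qed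
    qed
    have b2: "cmod (complex_of_real (p\<^sup>2) * fourier G p / complex_of_real (p\<^sup>2 - a)) \<le> B + a * (L / s)" for p
    proof (cases "p\<^sup>2 = a")
      case True then show ?thesis using L0 s0 B0 a by simp
    next
      case False
      have "complex_of_real (p\<^sup>2) * fourier G p / complex_of_real (p\<^sup>2 - a)
         = fourier G p + complex_of_real a * (fourier G p / complex_of_real (p\<^sup>2 - a))"
        using False by (simp add: field_simps del: of_real_diff of_real_power) (simp add: algebra_simps)
      also have "cmod \<dots> \<le> cmod (fourier G p) + cmod (complex_of_real a * (fourier G p / complex_of_real (p\<^sup>2 - a)))"
        by (rule norm_triangle_ineq)
      also have "\<dots> = cmod (fourier G p) + a * cmod (fourier G p / complex_of_real (p\<^sup>2 - a))"
        using a by (simp only: norm_mult norm_of_real abs_of_pos)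
      also have "\<dots> \<le> B + a * (L / s)" using FB[of p] b1[of p] a by (intro add_mono mult_left_mono) auto
      finally show ?thesis .
    qed
    show "Linf_finite (\<lambda>p. fourier G p / complex_of_real (p\<^sup>2 - a)) \<and>
      Linf_finite (\<lambda>p. complex_of_real (p\<^sup>2) * fourier G p / complex_of_real (p\<^sup>2 - a))"
      using Linf_bound[of "\<lambda>p. fourier G p / complex_of_real (p\<^sup>2 - a)", OF b1]
        Linf_bound[of "\<lambda>p. complex_of_real (p\<^sup>2) * fourier G p / complex_of_real (p\<^sup>2 - a)", OF b2] by simp
  qed
qed

lemma part_d:
  assumes G: "integrable lborel (G :: real \<Rightarrow> real)" and x2G: "integrable lborel (\<lambda>x. x\<^sup>2 * G x)"
  shows "M_finite G 0 \<longleftrightarrow> (LINT x|lborel. G x) = 0 \<and> (LINT x|lborel. x * G x) = 0"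
proof -
  have xG: "integrable lborel (\<lambda>x. x * G x)" by (rule integrable_xG[OF G x2G])
  define B where "B = c0 * (LINT x|lborel. \<bar>G x\<bar>)"
  define L where "L = c0 * (LINT x|lborel. \<bar>x * G x\<bar>)"
  define T where "T = c0 * (LINT x|lborel. \<bar>x\<^sup>2 * G x\<bar>) / 2"
  define D where "D = (LINT x|lborel. x * G x)"
  have B0: "B \<ge> 0" unfolding B_def using c0_pos by (simp add: integral_nonneg_AE)
  have L0: "L \<ge> 0" unfolding L_def using c0_pos by (simp add: integral_nonneg_AE)
  have T0: "T \<ge> 0" unfolding T_def using c0_pos by (simp add: integral_nonneg_AE)
  have FB: "cmod (fourier G p) \<le> B" for p using fourier_bound[OF G] by (simp add: B_def)
  have FL: "cmod (fourier G p - fourier G q) \<le> L * \<bar>p - q\<bar>" for p q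
    using fourier_lip[OF G xG] by (simp add: L_def)
  have FT: "cmod (fourier G p - fourier G 0 + \<i> * complex_of_real (p * c0 * D)) \<le> T * p\<^sup>2" for p
    using fourier_taylor[OF G xG x2G, of p] by (simp add: T_def D_def fourier_zero)
  have eq: "M_finite G 0 \<longleftrightarrow> Linf_finite (\<lambda>p. fourier G p / complex_of_real (p\<^sup>2)) \<and>
      Linf_finite (\<lambda>p. complex_of_real (p\<^sup>2) * fourier G p / complex_of_real (p\<^sup>2))"
    unfolding M_finite_def by simp
  show ?thesis
  proof
    assume "M_finite G 0"
    then obtain C where C: "AE p in lborel. cmod (fourier G p / complex_of_real (p\<^sup>2)) \<le> C"
      unfolding eq Linf_finite_def by blast
    have C2: "AE p in lborel. cmod (fourier G p) \<le> C * p\<^sup>2 \<and> p \<noteq> 0"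
      using C AE_lborel_singleton[of 0]
    proof eventually_elim
      case (elim p)
      have "cmod (fourier G p) = cmod (fourier G p / complex_of_real (p\<^sup>2)) * p\<^sup>2"
        using elim(2) by (simp add: norm_divide norm_power del: of_real_power)
      also have "\<dots> \<le> C * p\<^sup>2" using elim(1) by (simp add: mult_right_mono)
      finally show ?case using elim(2) by simp
    qed
    have "AE p in lborel. cmod (fourier G 0) \<le> C * p\<^sup>2 + L * \<bar>p\<bar>"
      using C2
    proof eventually_elim
      case (elim p)
      have "cmod (fourier G 0) \<le> cmod (fourier G p) + cmod (fourier G p - fourier G 0)"
        by (metis norm_triangle_sub add.commute norm_minus_commute)
      then show ?case using elim FL[of p 0] by simp
    qed
    moreover have "((\<lambda>p. C * p\<^sup>2 + L * \<bar>p\<bar>) \<longlongrightarrow> 0) (at 0)"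
    proof -
      have "((\<lambda>p. C * p\<^sup>2 + L * \<bar>p\<bar>) \<longlongrightarrow> C * 0\<^sup>2 + L * \<bar>0\<bar>) (at 0)"
        by (intro tendsto_intros)
      then show ?thesis by simp
    qed
    ultimately have "cmod (fourier G 0) = 0" by (rule AE_zero) simp
    then have F0: "fourier G 0 = 0" by simp
    have "AE p in lborel. c0 * \<bar>D\<bar> \<le> (C + T) * \<bar>p\<bar>"
      using C2
    proof eventually_elim
      case (elim p)
      have "cmod (\<i> * complex_of_real (p * c0 * D)) \<le> cmod (fourier G p) + cmod (fourier G p + \<i> * complex_of_real (p * c0 * D))"
        by (metis norm_triangle_sub add.commute norm_minus_commute add_diff_cancel_left')
      also have "\<dots> \<le> C * p\<^sup>2 + T * p\<^sup>2" using elim FT[of p] F0 by (intro add_mono) auto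
      finally have "\<bar>p\<bar> * (c0 * \<bar>D\<bar>) \<le> \<bar>p\<bar> * ((C + T) * \<bar>p\<bar>)"
        using c0_pos by (simp add: norm_mult abs_mult power2_eq_square algebra_simps)
      then show ?case using elim by simp
    qed
    moreover have "((\<lambda>p. (C + T) * \<bar>p\<bar>) \<longlongrightarrow> 0) (at 0)"
    proof -
      have "((\<lambda>p. (C + T) * \<bar>p\<bar>) \<longlongrightarrow> (C + T) * \<bar>0\<bar>) (at 0)"
        by (intro tendsto_intros)
      then show ?thesis by simp
    qed
    ultimately have "c0 * \<bar>D\<bar> = 0" by (rule AE_zero) (use c0_pos in simp)
    then show "(LINT x|lborel. G x) = 0 \<and> (LINT x|lborel. x * G x) = 0"
      using F0 fourier_zero_iff c0_pos by (simp add: D_def)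
  next
    assume Z: "(LINT x|lborel. G x) = 0 \<and> (LINT x|lborel. x * G x) = 0"
    then have F0: "fourier G 0 = 0" and D0: "D = 0" using fourier_zero_iff by (auto simp: D_def)
    have FTp: "cmod (fourier G p) \<le> T * p\<^sup>2" for p using FT[of p] F0 D0 by simp
    have b1: "cmod (fourier G p / complex_of_real (p\<^sup>2)) \<le> T" for p
    proof (cases "p = 0")
      case True then show ?thesis using T0 by simp
    next
      case False
      then have "p\<^sup>2 > 0" by simp
      then show ?thesis using FTp[of p]
        by (simp add: norm_divide norm_power divide_le_eq del: of_real_power)
    qed
    have b2: "cmod (complex_of_real (p\<^sup>2) * fourier G p / complex_of_real (p\<^sup>2)) \<le> B" for p
      using FB[of p] B0 by (cases "p = 0") auto
    show "M_finite G 0" unfolding eq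
      using Linf_bound[of "\<lambda>p. fourier G p / complex_of_real (p\<^sup>2)", OF b1]
        Linf_bound[of "\<lambda>p. complex_of_real (p\<^sup>2) * fourier G p / complex_of_real (p\<^sup>2)", OF b2] by simp
  qed
qed

theorem lemmaA1:
  fixes N K l r :: nat
    and G :: "nat \<Rightarrow> real \<Rightarrow> real"
    and a b :: "nat \<Rightarrow> real"
  assumes "N \<ge> 4" "K \<ge> 2" "1 \<le> l" "l \<le> K - 1" "K + 1 \<le> r" "r \<le> N - 1"
    and G_L1: "\<And>k. 1 \<le> k \<Longrightarrow> k \<le> N \<Longrightarrow> integrable lborel (G k)"
  shows
    "(\<forall>k. 1 \<le> k \<and> k \<le> l \<and> a k > 0 \<and> b k \<noteq> 0 \<longrightarrow> N_finite (G k) (a k) (b k))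
   \<and> (\<forall>k. l + 1 \<le> k \<and> k \<le> K \<and> a k = 0 \<and> b k \<noteq> 0 \<and>
          integrable lborel (\<lambda>x. x * G k x) \<longrightarrow>
          (N_finite (G k) 0 (b k) \<longleftrightarrow> (LINT x|lborel. G k x) = 0))
   \<and> (\<forall>k. K + 1 \<le> k \<and> k \<le> r \<and> a k > 0 \<and> integrable lborel (\<lambda>x. x * G k x) \<longrightarrow>
          (M_finite (G k) (a k) \<longleftrightarrow>
             (LINT x|lborel. complex_of_real (G k x) *
                 exp (- (\<i> * complex_of_real (sqrt (a k) * x)))) = 0 \<and>
             (LINT x|lborel. complex_of_real (G k x) *
                 exp (\<i> * complex_of_real (sqrt (a k) * x))) = 0))
   \<and> (\<forall>k. r + 1 \<le> k \<and> k \<le> N \<and> a k = 0 \<and> integrable lborel (\<lambda>x. x\<^sup>2 * G k x) \<longrightarrow>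
          (M_finite (G k) 0 \<longleftrightarrow>
             (LINT x|lborel. G k x) = 0 \<and> (LINT x|lborel. x * G k x) = 0))"
proof -
  have L1: "integrable lborel (G k)" if "1 \<le> k" "k \<le> N" for k using G_L1 that .
  have A: "\<forall>k. 1 \<le> k \<and> k \<le> l \<and> a k > 0 \<and> b k \<noteq> 0 \<longrightarrow> N_finite (G k) (a k) (b k)"
  proof (intro allI impI)
    fix k assume h: "1 \<le> k \<and> k \<le> l \<and> a k > 0 \<and> b k \<noteq> 0"
    then have "k \<le> N" using assms by linarith
    then show "N_finite (G k) (a k) (b k)" using part_a[OF L1] h by auto
  qed
  have Bp: "\<forall>k. l + 1 \<le> k \<and> k \<le> K \<and> a k = 0 \<and> b k \<noteq> 0 \<and>
          integrable lborel (\<lambda>x. x * G k x) \<longrightarrow>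
          (N_finite (G k) 0 (b k) \<longleftrightarrow> (LINT x|lborel. G k x) = 0)"
  proof (intro allI impI)
    fix k assume h: "l + 1 \<le> k \<and> k \<le> K \<and> a k = 0 \<and> b k \<noteq> 0 \<and> integrable lborel (\<lambda>x. x * G k x)"
    then have "1 \<le> k" "k \<le> N" using assms by linarith+
    then show "N_finite (G k) 0 (b k) \<longleftrightarrow> (LINT x|lborel. G k x) = 0" using part_b[OF L1] h by auto
  qed
  have Cp: "\<forall>k. K + 1 \<le> k \<and> k \<le> r \<and> a k > 0 \<and> integrable lborel (\<lambda>x. x * G k x) \<longrightarrow>
          (M_finite (G k) (a k) \<longleftrightarrow>
             (LINT x|lborel. complex_of_real (G k x) *
                 exp (- (\<i> * complex_of_real (sqrt (a k) * x)))) = 0 \<and>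
             (LINT x|lborel. complex_of_real (G k x) *
                 exp (\<i> * complex_of_real (sqrt (a k) * x))) = 0)"
  proof (intro allI impI)
    fix k assume h: "K + 1 \<le> k \<and> k \<le> r \<and> a k > 0 \<and> integrable lborel (\<lambda>x. x * G k x)"
    then have "1 \<le> k" "k \<le> N" using assms by linarith+
    then show "M_finite (G k) (a k) \<longleftrightarrow>
             (LINT x|lborel. complex_of_real (G k x) *
                 exp (- (\<i> * complex_of_real (sqrt (a k) * x)))) = 0 \<and>
             (LINT x|lborel. complex_of_real (G k x) *
                 exp (\<i> * complex_of_real (sqrt (a k) * x))) = 0"
      using part_c[OF L1] h by auto
  qed
  have Dp: "\<forall>k. r + 1 \<le> k \<and> k \<le> N \<and> a k = 0 \<and> integrable lborel (\<lambda>x. x\<^sup>2 * G k x) \<longrightarrow>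
          (M_finite (G k) 0 \<longleftrightarrow>
             (LINT x|lborel. G k x) = 0 \<and> (LINT x|lborel. x * G k x) = 0)"
  proof (intro allI impI)
    fix k assume h: "r + 1 \<le> k \<and> k \<le> N \<and> a k = 0 \<and> integrable lborel (\<lambda>x. x\<^sup>2 * G k x)"
    then have "1 \<le> k" "k \<le> N" using assms by linarith+
    then show "M_finite (G k) 0 \<longleftrightarrow>
             (LINT x|lborel. G k x) = 0 \<and> (LINT x|lborel. x * G k x) = 0"
      using part_d[OF L1] h by auto
  qed
  show ?thesis using A Bp Cp Dp by blast
qed

end
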